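(* Fix a thresholding parameter $\omega>0$ and let $\theta$ be a real-valued random variable with some distribution $\mathcal{P}_\theta$. For a relaxing parameter $\xi^2>0$, let $\tilde\theta$ be a random variable with $\tilde\theta \mid \theta \sim \mathrm{N}(\theta,\xi^2)$, and define $T_r(\theta,\omega,\xi^2)=\theta\cdot I(|\tilde\theta|>\omega)$ (relaxed thresholding), $T_h(\theta,\omega)=\theta\cdot I(|\theta|>\omega)$ (hard thresholding), and $T_s(\theta,\omega)=\operatorname{sgn}(\theta)(|\theta|-\omega)\cdot I(|\theta|>\omega)$ (soft thresholding), where $I(\cdot)$ is the indicator function. Let $\theta^\star=\theta+\omega$ when $\theta>0$ and $\theta^\star=\theta-\omega$ when $\theta<0$. Then for any $\epsilon>0$ there exist values of $\xi^2$ such that $\Pr\left(|T_r(\theta,\omega,\xi^2)-T_h(\theta,\omega)|<\epsilon\right)>0$, $\Pr\left(|T_r(\theta,\omega,\xi^2)-\theta|<\epsilon\right)>0$, and $\Pr\left(|T_r(\theta,\omega,\xi^2)-T_s(\theta^\star,\omega)|<\epsilon\right)>0$. Furthermore, $\lim_{\xi^2\to 0}T_r(\theta,\omega,\xi^2)=T_h(\theta,\omega)$ and $\lim_{\xi^2\to\infty}T_r(\theta,\omega,\xi^2)=\theta$.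
   Context: This is the scalar version of the relaxed-thresholded Gaussian process: given a kernel $\kappa$, $\omega\ge 0$ and $\xi>0$, if $f\sim\mathrm{GP}(0,\kappa)$ and $\tilde f(x)\sim\mathrm{N}(f(x),\xi^2)$ independently across $x$, then $g(x)=f(x)I(|\tilde f(x)|>\omega)$ is called a relaxed-thresholded Gaussian process. Here $\theta$ plays the role of $f(x)$ and $\tilde\theta$ the role of $\tilde f(x)$; $\xi^2$ is the relaxing parameter. *)

theory Defs
  imports "HOL-Probability.Probability"
begin

definition hard_thr :: "real \<Rightarrow> real \<Rightarrow> real" where
  "hard_thr w t = t * (if \<bar>t\<bar> > w then 1 else 0)"

definition soft_thr :: "real \<Rightarrow> real \<Rightarrow> real" where
  "soft_thr w t = sgn t * (\<bar>t\<bar> - w) * (if \<bar>t\<bar> > w then 1 else 0)"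

text \<open>Relaxed thresholding  T_r = t * I(|tt| > w), where tt is the relaxed
  (noisy) copy of t.\<close>
definition relaxed_thr :: "real \<Rightarrow> real \<Rightarrow> real \<Rightarrow> real" where
  "relaxed_thr w t tt = t * (if \<bar>tt\<bar> > w then 1 else 0)"

definition theta_star :: "real \<Rightarrow> real \<Rightarrow> real" where
  "theta_star w t = (if t > 0 then t + w else if t < 0 then t - w else t)"

end

theory Submission
  imports Defs
begin

lemma Zpos:
  assumes P: "prob_space M" and D: "distributed M lborel Z std_normal_density"
    and B: "B \<in> sets borel" and nz: "emeasure lborel B \<noteq> 0"
  shows "measure M (Z -` B \<inter> space M) > 0"
proof -
  have e: "emeasure M (Z -` B \<inter> space M) = (\<integral>\<^sup>+x. ennreal (std_normal_density x) * indicator B x \<partial>lborel)"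
    using distributed_emeasure[OF D] B by simp
  have "{x \<in> space lborel. ennreal (std_normal_density x) * indicator B x \<noteq> 0} = B"
    using normal_density_pos[of 1 0] by (auto simp: indicator_def less_le)
  moreover have "(\<lambda>x. ennreal (std_normal_density x) * indicator B x) \<in> borel_measurable lborel"
    using B by measurable
  ultimately have "(\<integral>\<^sup>+x. ennreal (std_normal_density x) * indicator B x \<partial>lborel) \<noteq> 0"
    using nz by (simp add: nn_integral_0_iff)
  hence "emeasure M (Z -` B \<inter> space M) \<noteq> 0" using e by simp
  moreover have "Z -` B \<inter> space M \<in> sets M"
    using D B by (auto dest: distributed_measurable)
  ultimately show ?thesis
    using finite_measure.emeasure_eq_measure[OF prob_space.axioms(1)[OF P]] 
    by (metis ennreal_0 zero_less_measure_iff)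
qed

lemma pos_prod:
  assumes P: "prob_space M" and I: "prob_space.indep_var M borel \<theta> borel Z"
    and D: "distributed M lborel Z std_normal_density"
    and A: "A \<in> sets borel" and B: "B \<in> sets borel" and nz: "emeasure lborel B \<noteq> 0"
    and pA: "measure M (\<theta> -` A \<inter> space M) > 0"
    and S: "S \<in> sets M" and sub: "\<And>x. x \<in> space M \<Longrightarrow> \<theta> x \<in> A \<Longrightarrow> Z x \<in> B \<Longrightarrow> x \<in> S"
  shows "measure M S > 0"
proof -
  have "measure M ((\<lambda>x. (\<theta> x, Z x)) -` (A \<times> B) \<inter> space M) =
     measure M (\<theta> -` A \<inter> space M) * measure M (Z -` B \<inter> space M)"
    using prob_space.indep_varD[OF P I A B] by simp
  also have "\<dots> > 0" using pA Zpos[OF P D B nz] by simp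
  also have "measure M ((\<lambda>x. (\<theta> x, Z x)) -` (A \<times> B) \<inter> space M) \<le> measure M S"
    using S sub by (intro finite_measure.finite_measure_mono[OF prob_space.axioms(1)[OF P]]) auto
  finally show ?thesis .
qed

lemma agree: "(\<bar>u\<bar> > w \<longleftrightarrow> \<bar>t\<bar> > w) \<Longrightarrow> relaxed_thr w t u - hard_thr w t = 0"
  by (simp add: relaxed_thr_def hard_thr_def)

lemma big: "\<bar>u\<bar> > w \<Longrightarrow> relaxed_thr w t u - t = 0"
  by (simp add: relaxed_thr_def)

lemma soft_star: "\<omega> > 0 \<Longrightarrow> soft_thr \<omega> (theta_star \<omega> t) = t"
  by (auto simp: soft_thr_def theta_star_def sgn_if)

lemma some_pos4:
  assumes P: "prob_space M" and f: "f \<in> borel_measurable M"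
    and cov: "\<And>t::real. t \<in> A1 \<or> t \<in> A2 \<or> t \<in> A3 \<or> t \<in> A4"
    and s: "A1 \<in> sets borel" "A2 \<in> sets borel" "A3 \<in> sets borel" "A4 \<in> sets borel"
  shows "measure M (f -` A1 \<inter> space M) > 0 \<or> measure M (f -` A2 \<inter> space M) > 0 \<or>
         measure M (f -` A3 \<inter> space M) > 0 \<or> measure M (f -` A4 \<inter> space M) > 0"
proof (rule ccontr)
  interpret prob_space M by fact
  assume "\<not> ?thesis"
  hence z: "measure M (f -` A1 \<inter> space M) = 0" "measure M (f -` A2 \<inter> space M) = 0"
     "measure M (f -` A3 \<inter> space M) = 0" "measure M (f -` A4 \<inter> space M) = 0"
    by (simp_all add: not_less measure_le_0_iff)
  have ms: "f -` Ai \<inter> space M \<in> events" if "Ai \<in> sets borel" for Ai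
    using measurable_sets[OF f that] .
  have eq: "space M = ((f -` A1 \<inter> space M) \<union> (f -` A2 \<inter> space M)) \<union> ((f -` A3 \<inter> space M) \<union> (f -` A4 \<inter> space M))"
    using cov by blast
  have "prob (space M) \<le> prob ((f -` A1 \<inter> space M) \<union> (f -` A2 \<inter> space M)) + prob ((f -` A3 \<inter> space M) \<union> (f -` A4 \<inter> space M))"
    by (subst eq, rule measure_Un_le) (auto intro!: ms s)
  also have "\<dots> \<le> (prob (f -` A1 \<inter> space M) + prob (f -` A2 \<inter> space M)) + (prob (f -` A3 \<inter> space M) + prob (f -` A4 \<inter> space M))"
    by (intro add_mono measure_Un_le ms s)
  finally show False using z prob_space by simp
qed

theorem proposition1:
  fixes M :: "'a measure" and \<theta> Z :: "'a \<Rightarrow> real" and \<omega> :: real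
  assumes "prob_space M"
    and "\<omega> > 0"
    and "\<theta> \<in> borel_measurable M"
    and "distributed M lborel Z std_normal_density"
    and "prob_space.indep_var M borel \<theta> borel Z"
  shows "(\<forall>\<epsilon>>0. \<exists>\<xi>2>0.
            measure M {x \<in> space M. \<bar>relaxed_thr \<omega> (\<theta> x) (\<theta> x + sqrt \<xi>2 * Z x)
                                       - hard_thr \<omega> (\<theta> x)\<bar> < \<epsilon>} > 0
          \<and> measure M {x \<in> space M. \<bar>relaxed_thr \<omega> (\<theta> x) (\<theta> x + sqrt \<xi>2 * Z x)
                                       - \<theta> x\<bar> < \<epsilon>} > 0
          \<and> measure M {x \<in> space M. \<bar>relaxed_thr \<omega> (\<theta> x) (\<theta> x + sqrt \<xi>2 * Z x)
                                       - soft_thr \<omega> (theta_star \<omega> (\<theta> x))\<bar> < \<epsilon>} > 0)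
       \<and> (AE x in M. \<bar>\<theta> x\<bar> \<noteq> \<omega> \<longrightarrow>
            ((\<lambda>\<xi>2. relaxed_thr \<omega> (\<theta> x) (\<theta> x + sqrt \<xi>2 * Z x))
               \<longlongrightarrow> hard_thr \<omega> (\<theta> x)) (at_right 0))
       \<and> (AE x in M.
            ((\<lambda>\<xi>2. relaxed_thr \<omega> (\<theta> x) (\<theta> x + sqrt \<xi>2 * Z x))
               \<longlongrightarrow> \<theta> x) at_top)"
proof -
  note P = assms(1) and w = assms(2) and th[measurable] = assms(3) and D = assms(4) and I = assms(5)
  have Zm[measurable]: "Z \<in> borel_measurable M"
    using distributed_measurable[OF D] by simp
  show ?thesis
proof (intro conjI allI impI)
  have lb: "emeasure lborel {a..b} \<noteq> 0" if "a < b" for a b :: real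
    using that by simp
  fix \<epsilon> :: real assume e: "\<epsilon> > 0"
  let ?S1 = "{x \<in> space M. \<bar>relaxed_thr \<omega> (\<theta> x) (\<theta> x + sqrt 1 * Z x) - hard_thr \<omega> (\<theta> x)\<bar> < \<epsilon>}"
  let ?S2 = "{x \<in> space M. \<bar>relaxed_thr \<omega> (\<theta> x) (\<theta> x + sqrt 1 * Z x) - \<theta> x\<bar> < \<epsilon>}"
  let ?S3 = "{x \<in> space M. \<bar>relaxed_thr \<omega> (\<theta> x) (\<theta> x + sqrt 1 * Z x) - soft_thr \<omega> (theta_star \<omega> (\<theta> x))\<bar> < \<epsilon>}"
  have S1: "?S1 \<in> sets M" unfolding relaxed_thr_def hard_thr_def by measurable
  have S2: "?S2 \<in> sets M" unfolding relaxed_thr_def by measurable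
  have S32: "?S3 = ?S2" using w by (simp add: soft_star)
  have m1: "measure M ?S1 > 0"
  proof -
    have "measure M (\<theta> -` {\<omega><..} \<inter> space M) > 0 \<or> measure M (\<theta> -` {0..\<omega>} \<inter> space M) > 0 \<or>
         measure M (\<theta> -` {-\<omega>..<0} \<inter> space M) > 0 \<or> measure M (\<theta> -` {..< -\<omega>} \<inter> space M) > 0"
      by (rule some_pos4[OF P th]) auto
    thus ?thesis
    proof (elim disjE)
      assume a: "measure M (\<theta> -` {\<omega><..} \<inter> space M) > 0"
      show ?thesis
        by (rule pos_prod[OF P I D _ _ lb[of 0 \<omega>] a S1]) (use w e in \<open>auto simp: agree abs_if\<close>)
    next
      assume a: "measure M (\<theta> -` {0..\<omega>} \<inter> space M) > 0"
      show ?thesis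
        by (rule pos_prod[OF P I D _ _ lb[of "-\<omega>" 0] a S1]) (use w e in \<open>auto simp: agree abs_if\<close>)
    next
      assume a: "measure M (\<theta> -` {-\<omega>..<0} \<inter> space M) > 0"
      show ?thesis
        by (rule pos_prod[OF P I D _ _ lb[of 0 \<omega>] a S1]) (use w e in \<open>auto simp: agree abs_if\<close>)
    next
      assume a: "measure M (\<theta> -` {..< -\<omega>} \<inter> space M) > 0"
      show ?thesis
        by (rule pos_prod[OF P I D _ _ lb[of "-\<omega>" 0] a S1]) (use w e in \<open>auto simp: agree abs_if\<close>)
    qed
  qed
  have m2: "measure M ?S2 > 0"
  proof -
    have "measure M (\<theta> -` {0..} \<inter> space M) > 0 \<or> measure M (\<theta> -` {..<0} \<inter> space M) > 0 \<or>
         measure M (\<theta> -` {} \<inter> space M) > 0 \<or> measure M (\<theta> -` {} \<inter> space M) > 0"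
      by (rule some_pos4[OF P th]) auto
    thus ?thesis
    proof (elim disjE)
      assume a: "measure M (\<theta> -` {0..} \<inter> space M) > 0"
      show ?thesis
        by (rule pos_prod[OF P I D _ _ lb[of "\<omega>+1" "\<omega>+2"] a S2]) (use w e in \<open>auto simp: big abs_if\<close>)
    next
      assume a: "measure M (\<theta> -` {..<0} \<inter> space M) > 0"
      show ?thesis
        by (rule pos_prod[OF P I D _ _ lb[of "-\<omega>-2" "-\<omega>-1"] a S2]) (use w e in \<open>auto simp: big abs_if\<close>)
    qed simp_all
  qed
  show "\<exists>\<xi>2>0. measure M {x \<in> space M. \<bar>relaxed_thr \<omega> (\<theta> x) (\<theta> x + sqrt \<xi>2 * Z x) - hard_thr \<omega> (\<theta> x)\<bar> < \<epsilon>} > 0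
          \<and> measure M {x \<in> space M. \<bar>relaxed_thr \<omega> (\<theta> x) (\<theta> x + sqrt \<xi>2 * Z x) - \<theta> x\<bar> < \<epsilon>} > 0
          \<and> measure M {x \<in> space M. \<bar>relaxed_thr \<omega> (\<theta> x) (\<theta> x + sqrt \<xi>2 * Z x)
                                       - soft_thr \<omega> (theta_star \<omega> (\<theta> x))\<bar> < \<epsilon>} > 0"
    by (rule exI[of _ 1]) (use m1 m2 S32 in simp)
next
  show "AE x in M. \<bar>\<theta> x\<bar> \<noteq> \<omega> \<longrightarrow>
            ((\<lambda>\<xi>2. relaxed_thr \<omega> (\<theta> x) (\<theta> x + sqrt \<xi>2 * Z x))
               \<longlongrightarrow> hard_thr \<omega> (\<theta> x)) (at_right 0)"
  proof (intro AE_I2 impI)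
    fix x assume ne: "\<bar>\<theta> x\<bar> \<noteq> \<omega>"
    have "((\<lambda>\<xi>2. \<bar>\<theta> x + sqrt \<xi>2 * Z x\<bar>) \<longlongrightarrow> \<bar>\<theta> x + sqrt 0 * Z x\<bar>) (at_right 0)"
      by (intro tendsto_intros tendsto_within_subset[OF tendsto_real_sqrt[OF tendsto_ident_at]]) auto
    hence t: "((\<lambda>\<xi>2. \<bar>\<theta> x + sqrt \<xi>2 * Z x\<bar>) \<longlongrightarrow> \<bar>\<theta> x\<bar>) (at_right 0)" by simp
    show "((\<lambda>\<xi>2. relaxed_thr \<omega> (\<theta> x) (\<theta> x + sqrt \<xi>2 * Z x)) \<longlongrightarrow> hard_thr \<omega> (\<theta> x)) (at_right 0)"
    proof (cases "\<bar>\<theta> x\<bar> > \<omega>")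
      case True
      show ?thesis
        by (rule tendsto_eventually, rule eventually_mono[OF order_tendstoD(1)[OF t True]])
           (use True in \<open>simp add: relaxed_thr_def hard_thr_def\<close>)
    next
      case False
      hence lt: "\<bar>\<theta> x\<bar> < \<omega>" using ne by simp
      show ?thesis
        by (rule tendsto_eventually, rule eventually_mono[OF order_tendstoD(2)[OF t lt]])
           (use lt in \<open>simp add: relaxed_thr_def hard_thr_def\<close>)
    qed
  qed
next
  have "AE x in M. Z x \<noteq> 0"
  proof (rule AE_I')
    show "Z -` {0} \<inter> space M \<in> null_sets M"
    proof -
      have "emeasure M (Z -` {0} \<inter> space M) = (\<integral>\<^sup>+x. ennreal (std_normal_density x) * indicator {0} x \<partial>lborel)"
        using distributed_emeasure[OF D] by simp
      also have "\<dots> = 0"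
        by (subst nn_integral_0_iff_AE) (use AE_lborel_singleton[of 0] in \<open>auto simp: indicator_def\<close>)
      finally show ?thesis using Zm by (auto simp: null_sets_def)
    qed
  qed auto
  thus "AE x in M. ((\<lambda>\<xi>2. relaxed_thr \<omega> (\<theta> x) (\<theta> x + sqrt \<xi>2 * Z x)) \<longlongrightarrow> \<theta> x) at_top"
  proof (rule eventually_mono)
    fix x assume z: "Z x \<noteq> 0"
    define N where "N = ((\<bar>\<theta> x\<bar> + \<omega> + 1) / \<bar>Z x\<bar>)^2"
    have "\<forall>\<xi>2\<ge>N. relaxed_thr \<omega> (\<theta> x) (\<theta> x + sqrt \<xi>2 * Z x) = \<theta> x"
    proof (intro allI impI)
      fix \<xi>2 assume "\<xi>2 \<ge> N"
      moreover have "N \<ge> 0" unfolding N_def by simp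
      ultimately have x0: "\<xi>2 \<ge> 0" by linarith
      have "sqrt \<xi>2 \<ge> sqrt N" using \<open>\<xi>2 \<ge> N\<close> by simp
      also have "sqrt N = (\<bar>\<theta> x\<bar> + \<omega> + 1) / \<bar>Z x\<bar>" unfolding N_def using w by simp
      finally have "sqrt \<xi>2 * \<bar>Z x\<bar> \<ge> \<bar>\<theta> x\<bar> + \<omega> + 1" using z by (simp add: field_simps)
      hence "\<bar>sqrt \<xi>2 * Z x\<bar> \<ge> \<bar>\<theta> x\<bar> + \<omega> + 1" using x0 by (simp add: abs_mult)
      hence "\<bar>\<theta> x + sqrt \<xi>2 * Z x\<bar> > \<omega>" by linarith
      thus "relaxed_thr \<omega> (\<theta> x) (\<theta> x + sqrt \<xi>2 * Z x) = \<theta> x" by (simp add: relaxed_thr_def)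
    qed
    thus "((\<lambda>\<xi>2. relaxed_thr \<omega> (\<theta> x) (\<theta> x + sqrt \<xi>2 * Z x)) \<longlongrightarrow> \<theta> x) at_top"
      by (intro tendsto_eventually) (auto simp: eventually_at_top_linorder)
  qed
qed
qed

end
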